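(* Let $L$ be an infinite set and let $Q$ be either the edgeless cube $Q_L$ or the edged cube $\bar Q_L$. A basic sequence on $Q$ is universally convergent if and only if it is twist-finite.
   Context: Let $L$ be an infinite set, $-L=\{-r:r\in L\}$ a disjoint copy of $L$, and $0$ a new element; $L^\dagger=-L\cup\{0\}\cup L$ with $-(-r)=r$, $-0=0$. Adjoin $\pm\infty$ with $-(+\infty)=-\infty$ and set $\bar L^\dagger=L^\dagger\cup\{\pm\infty\}$. Points of $U=(\bar L^\dagger)^3$ have coordinates $x,y,z$. The edgeless cube $Q_L$ is the set of points of $U$ with exactly one coordinate in $\{\pm\infty\}$ (cells). The edged cube $\bar Q_L$ is the set of cells $(p,i)$ with $p\in U$, $i\in\{x,y,z\}$, $p_i\in\{\pm\infty\}$ ($i$ marks the face). For $i\in\{x,y,z\}$, $\alpha\in\bar L^\dagger$, the quarter-turn twist $T_{i,\alpha}$ is the permutation of cells fixing every cell whose point $p$ has $p_i\ne\alpha$ and acting on the others by $T_{x,\alpha}(\alpha,y,z)=(\alpha,-z,y)$, $T_{y,\alpha}(x,\alpha,z)=(z,\alpha,-x)$, $T_{z,\alpha}(x,y,\alpha)=(-y,x,\alpha)$ (in $\bar Q_L$ the marked coordinate is carried along by the rotation). Basic twists are $T,T^2,T^3$ for quarter-turn twists $T$. A basic sequence is a sequence $\langle\sigma_\eta:\eta<\theta\rangle$ of basic twists of ordinal length $\theta$; it is twist-finite if each basic twist occurs in it only finitely many times. A labelling is a map $f$ from cells to $X\cup\{\mathrm{NaC}\}$ for a set $X\not\ni\mathrm{NaC}$;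 it is legal if it never takes value NaC. A twist $\sigma$ acts by $(\sigma f)(c)=f(\sigma^{-1}c)$. Applying $\langle\sigma_\eta:\eta<\theta\rangle$ to $f_0$ produces $f_{\eta+1}=\sigma_\eta f_\eta$, and for limit $\lambda\le\theta$, $f_\lambda(c)$ is the eventually constant value of $f_\eta(c)$ ($\eta<\lambda$) if it exists and NaC otherwise; $f_\theta$ is the terminal labelling. The sequence is universally convergent if, applied to the identity labelling (each cell labelled by itself), its terminal labelling is legal. *)

theory Defs
  imports Main
begin

datatype 'a crd = Neg 'a | Zero | Pos 'a | PInf | NInf

fun cneg :: "'a crd \<Rightarrow> 'a crd" where
  "cneg (Neg r) = Pos r"
| "cneg (Pos r) = Neg r"
| "cneg Zero = Zero"
| "cneg PInf = NInf"
| "cneg NInf = PInf"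

definition crd_set :: "'a set \<Rightarrow> 'a crd set" where
  "crd_set L = {Neg r | r. r \<in> L} \<union> {Zero} \<union> {Pos r | r. r \<in> L} \<union> {PInf, NInf}"

definition is_inf :: "'a crd \<Rightarrow> bool" where
  "is_inf c \<longleftrightarrow> c = PInf \<or> c = NInf"

datatype axis = AX | AY | AZ

type_synonym 'a pt = "'a crd \<times> 'a crd \<times> 'a crd"

fun coord :: "axis \<Rightarrow> 'a pt \<Rightarrow> 'a crd" where
  "coord AX (x, y, z) = x"
| "coord AY (x, y, z) = y"
| "coord AZ (x, y, z) = z"

definition Ucube :: "'a set \<Rightarrow> 'a pt set" where
  "Ucube L = {p. \<forall>i. coord i p \<in> crd_set L}"

definition edgeless :: "'a set \<Rightarrow> 'a pt set" where
  "edgeless L = {p \<in> Ucube L. card {i. is_inf (coord i p)} = 1}"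

text \<open>Edged cube: pairs (p, i) with p_i infinite (i marks the face).\<close>
definition edged :: "'a set \<Rightarrow> ('a pt \<times> axis) set" where
  "edged L = {(p, i). p \<in> Ucube L \<and> is_inf (coord i p)}"

fun rotp :: "axis \<Rightarrow> 'a pt \<Rightarrow> 'a pt" where
  "rotp AX (x, y, z) = (x, cneg z, y)"
| "rotp AY (x, y, z) = (z, y, cneg x)"
| "rotp AZ (x, y, z) = (cneg y, x, z)"

text \<open>How the rotation about axis i carries a marked coordinate.\<close>
fun rota :: "axis \<Rightarrow> axis \<Rightarrow> axis" where
  "rota AX AX = AX" | "rota AX AY = AZ" | "rota AX AZ = AY"
| "rota AY AY = AY" | "rota AY AX = AZ" | "rota AY AZ = AX"
| "rota AZ AZ = AZ" | "rota AZ AX = AY" | "rota AZ AY = AX"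

definition qturn_pt :: "'a set \<Rightarrow> axis \<Rightarrow> 'a crd \<Rightarrow> 'a pt \<Rightarrow> 'a pt" where
  "qturn_pt L i \<alpha> p = (if p \<in> edgeless L \<and> coord i p = \<alpha> then rotp i p else p)"

definition qturn_edge :: "'a set \<Rightarrow> axis \<Rightarrow> 'a crd \<Rightarrow> 'a pt \<times> axis \<Rightarrow> 'a pt \<times> axis" where
  "qturn_edge L i \<alpha> c =
     (if c \<in> edged L \<and> coord i (fst c) = \<alpha> then (rotp i (fst c), rota i (snd c)) else c)"

definition basic_twists :: "'a crd set \<Rightarrow> (axis \<Rightarrow> 'a crd \<Rightarrow> 'c \<Rightarrow> 'c) \<Rightarrow> ('c \<Rightarrow> 'c) set" where
  "basic_twists A qt = {(qt i \<alpha>) ^^ k | i \<alpha> k. \<alpha> \<in> A \<and> k \<in> {1, 2, 3}}"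

datatype 'x lab = Val 'x | NaC

definition act :: "('c \<Rightarrow> 'c) \<Rightarrow> ('c \<Rightarrow> 'x lab) \<Rightarrow> ('c \<Rightarrow> 'x lab)" where
  "act \<sigma> f = (\<lambda>c. f (inv \<sigma> c))"

text \<open>A basic sequence of ordinal length theta is indexed by a well-ordered set I
  (of order type theta). Stages are cuts: Some i is the stage just before the
  twist at i is applied (f_eta, eta the position of i); None is the terminal stage f_theta.\<close>
fun cut_below :: "'i::wellorder set \<Rightarrow> 'i option \<Rightarrow> 'i set" where
  "cut_below I None = I"
| "cut_below I (Some i) = {k \<in> I. k < i}"

definition stage ::
  "'i::wellorder set \<Rightarrow> ('i \<Rightarrow> 'c \<Rightarrow> 'c) \<Rightarrow> ('c \<Rightarrow> 'x lab)
    \<Rightarrow> ('i option \<Rightarrow> 'c \<Rightarrow> 'x lab) \<Rightarrow> 'i option \<Rightarrow> 'c \<Rightarrow> 'x lab" where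
  "stage I \<sigma> f0 F x =
     (let B = cut_below I x in
      if B = {} then f0
      else if (\<exists>m\<in>B. \<forall>k\<in>B. k \<le> m) then
        (let m = (THE m. m \<in> B \<and> (\<forall>k\<in>B. k \<le> m)) in act (\<sigma> m) (F (Some m)))
      else (\<lambda>c. if (\<exists>v. \<exists>k\<in>B. \<forall>k'\<in>B. k \<le> k' \<longrightarrow> F (Some k') c = v)
                then (THE v. \<exists>k\<in>B. \<forall>k'\<in>B. k \<le> k' \<longrightarrow> F (Some k') c = v)
                else NaC))"

definition run ::
  "'i::wellorder set \<Rightarrow> ('i \<Rightarrow> 'c \<Rightarrow> 'c) \<Rightarrow> ('c \<Rightarrow> 'x lab) \<Rightarrow> 'i option \<Rightarrow> 'c \<Rightarrow> 'x lab" where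
  "run I \<sigma> f0 = (THE F. \<forall>x. F x = stage I \<sigma> f0 F x)"

definition terminal ::
  "'i::wellorder set \<Rightarrow> ('i \<Rightarrow> 'c \<Rightarrow> 'c) \<Rightarrow> ('c \<Rightarrow> 'x lab) \<Rightarrow> 'c \<Rightarrow> 'x lab" where
  "terminal I \<sigma> f0 = run I \<sigma> f0 None"

definition basic_sequence :: "('c \<Rightarrow> 'c) set \<Rightarrow> 'i set \<Rightarrow> ('i \<Rightarrow> 'c \<Rightarrow> 'c) \<Rightarrow> bool" where
  "basic_sequence Tw I \<sigma> \<longleftrightarrow> (\<forall>\<eta>\<in>I. \<sigma> \<eta> \<in> Tw)"

definition twist_finite :: "'i set \<Rightarrow> ('i \<Rightarrow> 'c \<Rightarrow> 'c) \<Rightarrow> bool" where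
  "twist_finite I \<sigma> \<longleftrightarrow> (\<forall>\<tau>. finite {\<eta> \<in> I. \<sigma> \<eta> = \<tau>})"

definition universally_convergent :: "'c set \<Rightarrow> 'i::wellorder set \<Rightarrow> ('i \<Rightarrow> 'c \<Rightarrow> 'c) \<Rightarrow> bool" where
  "universally_convergent C I \<sigma> \<longleftrightarrow> (\<forall>c\<in>C. terminal I \<sigma> (\<lambda>c. Val c) c \<noteq> NaC)"

end

theory Submission
  imports Defs
begin


definition RelS :: "'i::wellorder set \<Rightarrow> ('i option \<times> 'i option) set" where
  "RelS I = {(Some k, x) | k x. k \<in> cut_below I x}"

lemma wf_RelS: "wf (RelS (I::'i::wellorder set))"
proof (rule wfUNIVI)
  fix P :: "'i option \<Rightarrow> bool" and x
  assume step: "\<forall>x. (\<forall>y. (y, x) \<in> RelS I \<longrightarrow> P y) \<longrightarrow> P x"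
  have S: "P (Some k)" for k
  proof (induction k rule: less_induct)
    case (less k)
    from step have "(\<forall>y. (y, Some k) \<in> RelS I \<longrightarrow> P y) \<longrightarrow> P (Some k)" by blast
    moreover have "\<forall>y. (y, Some k) \<in> RelS I \<longrightarrow> P y" using less by (auto simp: RelS_def)
    ultimately show ?case by blast
  qed
  show "P x"
  proof (cases x)
    case None
    then show ?thesis using step S by (auto simp: RelS_def)
  qed (use S in auto)
qed

lemma stage_empty: "cut_below I x = {} \<Longrightarrow> stage I \<sigma> f0 F x = f0"
  unfolding stage_def Let_def by simp

lemma stage_max:
  assumes "m \<in> cut_below I x" "\<forall>k\<in>cut_below I x. k \<le> m"
  shows "stage I \<sigma> f0 F x = act (\<sigma> m) (F (Some m))"
proof -
  have t: "(THE m. m \<in> cut_below I x \<and> (\<forall>k\<in>cut_below I x. k \<le> m)) = m"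
    using assms by (intro the_equality) (auto intro: order.antisym)
  have a: "(cut_below I x = {}) = False" using assms by blast
  have b: "(\<exists>m\<in>cut_below I x. \<forall>k\<in>cut_below I x. k \<le> m) = True" using assms by blast
  show ?thesis unfolding stage_def Let_def by (simp only: a b t if_True if_False)
qed

lemma stage_lim:
  assumes "cut_below I x \<noteq> {}" "\<not>(\<exists>m\<in>cut_below I x. \<forall>k\<in>cut_below I x. k \<le> m)"
  shows "stage I \<sigma> f0 F x = (\<lambda>c. if (\<exists>v. \<exists>k\<in>cut_below I x. \<forall>k'\<in>cut_below I x. k \<le> k' \<longrightarrow> F (Some k') c = v)
                then (THE v. \<exists>k\<in>cut_below I x. \<forall>k'\<in>cut_below I x. k \<le> k' \<longrightarrow> F (Some k') c = v)
                else NaC)"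
proof -
  have a: "(cut_below I x = {}) = False" using assms by blast
  have b: "(\<exists>m\<in>cut_below I x. \<forall>k\<in>cut_below I x. k \<le> m) = False" using assms by blast
  show ?thesis unfolding stage_def Let_def by (simp only: a b if_True if_False)
qed

lemma stage_cong:
  assumes "\<And>k. k \<in> cut_below I x \<Longrightarrow> F (Some k) = G (Some k)"
  shows "stage I \<sigma> f0 F x = stage I \<sigma> f0 G x"
proof -
  consider (e) "cut_below I x = {}" | (m) m where "m \<in> cut_below I x" "\<forall>k\<in>cut_below I x. k \<le> m"
    | (l) "cut_below I x \<noteq> {}" "\<not>(\<exists>m\<in>cut_below I x. \<forall>k\<in>cut_below I x. k \<le> m)" by blast
  then show ?thesis
  proof cases
    case e then show ?thesis by (simp add: stage_empty)
  next
    case m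
    then show ?thesis using assms by (simp add: stage_max)
  next
    case l
    have e: "(\<forall>k'\<in>cut_below I x. k \<le> k' \<longrightarrow> F (Some k') c = v) = (\<forall>k'\<in>cut_below I x. k \<le> k' \<longrightarrow> G (Some k') c = v)" for k c v
      using assms by auto
    show ?thesis unfolding stage_lim[OF l] by (simp only: e)
  qed
qed

lemma run_eq: "run I \<sigma> f0 x = stage I \<sigma> f0 (run I \<sigma> f0) x"
proof -
  define F where "F = stage I \<sigma> f0"
  have adm: "adm_wf (RelS I) F"
    unfolding adm_wf_def F_def by (auto intro!: stage_cong simp: RelS_def)
  have fp: "wfrec (RelS I) F = F (wfrec (RelS I) F)"
    by (rule wfrec_fixpoint[OF wf_RelS adm])
  have "run I \<sigma> f0 = wfrec (RelS I) F"
    unfolding run_def F_def[symmetric]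
  proof (rule the_equality)
    show "\<forall>x. wfrec (RelS I) F x = F (wfrec (RelS I) F) x" using fp by metis
  next
    fix G assume G: "\<forall>x. G x = F G x"
    show "G = wfrec (RelS I) F"
    proof
      fix x show "G x = wfrec (RelS I) F x"
      proof (induction x rule: wf_induct[OF wf_RelS[of I]])
        case (1 x)
        have "G x = F G x" using G by blast
        also have "\<dots> = F (wfrec (RelS I) F) x"
        proof -
          have "\<And>k. k \<in> cut_below I x \<Longrightarrow> G (Some k) = wfrec (RelS I) F (Some k)"
            using 1 by (auto simp: RelS_def)
          then have "stage I \<sigma> f0 G x = stage I \<sigma> f0 (wfrec (RelS I) F) x" by (rule stage_cong)
          then show ?thesis by (simp only: F_def)
        qed
        also have "\<dots> = wfrec (RelS I) F x" using fp by metis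
        finally show ?case .
      qed
    qed
  qed
  then show ?thesis using fp F_def by metis
qed

lemma run_empty: "cut_below I x = {} \<Longrightarrow> run I \<sigma> f0 x = f0"
  by (subst run_eq) (simp add: stage_empty)

lemma run_succ:
  assumes "m \<in> cut_below I x" "\<forall>k\<in>cut_below I x. k \<le> m"
  shows "run I \<sigma> f0 x = act (\<sigma> m) (run I \<sigma> f0 (Some m))"
  by (subst run_eq) (simp add: stage_max[OF assms])

lemma run_succ_app:
  assumes "m \<in> cut_below I x" "\<forall>k\<in>cut_below I x. k \<le> m"
  shows "run I \<sigma> f0 x c = run I \<sigma> f0 (Some m) (inv (\<sigma> m) c)"
  unfolding run_succ[OF assms] act_def by simp

lemma ev_the:
  fixes B :: "'i::linorder set"
  assumes "k \<in> B" "\<forall>k'\<in>B. k \<le> k' \<longrightarrow> g k' = v"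
  shows "(THE v. \<exists>k\<in>B. \<forall>k'\<in>B. k \<le> k' \<longrightarrow> g k' = v) = v"
proof (rule the_equality)
  show "\<exists>k\<in>B. \<forall>k'\<in>B. k \<le> k' \<longrightarrow> g k' = v" using assms by blast
next
  fix v' assume "\<exists>k\<in>B. \<forall>k'\<in>B. k \<le> k' \<longrightarrow> g k' = v'"
  then obtain k2 where k2: "k2 \<in> B" "\<forall>k'\<in>B. k2 \<le> k' \<longrightarrow> g k' = v'" by blast
  have "max k k2 \<in> B" using k2(1) assms(1) by (simp add: max_def)
  then show "v' = v" using k2 assms by (metis max.cobounded1 max.cobounded2)
qed

lemma run_lim:
  assumes "cut_below I x \<noteq> {}" "\<not>(\<exists>m\<in>cut_below I x. \<forall>k\<in>cut_below I x. k \<le> m)"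
  shows "run I \<sigma> f0 x c = (if (\<exists>v. \<exists>k\<in>cut_below I x. \<forall>k'\<in>cut_below I x. k \<le> k' \<longrightarrow> run I \<sigma> f0 (Some k') c = v)
                then (THE v. \<exists>k\<in>cut_below I x. \<forall>k'\<in>cut_below I x. k \<le> k' \<longrightarrow> run I \<sigma> f0 (Some k') c = v)
                else NaC)"
  by (subst run_eq[of I \<sigma> f0 x]) (simp only: stage_lim[OF assms])

lemma run_lim_ev:
  assumes "\<not>(\<exists>m\<in>cut_below I x. \<forall>k\<in>cut_below I x. k \<le> m)"
    "k \<in> cut_below I x" "\<forall>k'\<in>cut_below I x. k \<le> k' \<longrightarrow> run I \<sigma> f0 (Some k') c = v"
  shows "run I \<sigma> f0 x c = v"
proof -
  have ne: "cut_below I x \<noteq> {}" using assms(2) by blast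
  have ex: "\<exists>v. \<exists>k\<in>cut_below I x. \<forall>k'\<in>cut_below I x. k \<le> k' \<longrightarrow> run I \<sigma> f0 (Some k') c = v"
    using assms(2,3) by blast
  have "run I \<sigma> f0 x c = (THE v. \<exists>k\<in>cut_below I x. \<forall>k'\<in>cut_below I x. k \<le> k' \<longrightarrow> run I \<sigma> f0 (Some k') c = v)"
    by (subst run_lim[OF ne assms(1)]) (simp only: if_P[OF ex])
  also have "\<dots> = v" by (rule ev_the[OF assms(2,3)])
  finally show ?thesis .
qed

lemma run_lim_nac:
  assumes "\<not>(\<exists>m\<in>cut_below I x. \<forall>k\<in>cut_below I x. k \<le> m)"
    "run I \<sigma> f0 x c \<noteq> NaC" "cut_below I x \<noteq> {}"
  shows "\<exists>k\<in>cut_below I x. \<forall>k'\<in>cut_below I x. k \<le> k' \<longrightarrow> run I \<sigma> f0 (Some k') c = run I \<sigma> f0 x c"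
proof -
  have ne: "cut_below I x \<noteq> {}" by fact
  show ?thesis
  proof (cases "\<exists>v. \<exists>k\<in>cut_below I x. \<forall>k'\<in>cut_below I x. k \<le> k' \<longrightarrow> run I \<sigma> f0 (Some k') c = v")
    case True
    then obtain v k where kv: "k\<in>cut_below I x" "\<forall>k'\<in>cut_below I x. k \<le> k' \<longrightarrow> run I \<sigma> f0 (Some k') c = v" by blast
    have "run I \<sigma> f0 x c = v" by (rule run_lim_ev[OF assms(1) kv])
    then show ?thesis using kv by auto
  next
    case False
    have "run I \<sigma> f0 x c = NaC"
      by (subst run_lim[OF ne assms(1)]) (simp only: if_not_P[OF False])
    then show ?thesis using assms(2) by blast
  qed
qed


lemma cut_sub: "cut_below I x \<subseteq> I" by (cases x) auto

lemma cut_down: "k \<in> cut_below I x \<Longrightarrow> j \<in> I \<Longrightarrow> j \<le> k \<Longrightarrow> j \<in> cut_below I x"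
  by (cases x) auto

lemma run_const:
  assumes bij: "\<forall>\<eta>\<in>I. bij (\<sigma> \<eta>)" and k0: "k0 \<in> I"
  shows "k0 \<le> j \<Longrightarrow> (\<forall>\<eta>\<in>I. k0 \<le> \<eta> \<and> \<eta> < j \<longrightarrow> \<sigma> \<eta> c = c) \<Longrightarrow>
         run I \<sigma> f0 (Some j) c = run I \<sigma> f0 (Some k0) c"
proof (induction j rule: less_induct)
  case (less j)
  show ?case
  proof (cases "j = k0")
    case True then show ?thesis by simp
  next
    case False
    then have lt: "k0 < j" using less.prems by simp
    have k0B: "k0 \<in> cut_below I (Some j)" using k0 lt by simp
    show ?thesis
    proof (cases "\<exists>m\<in>cut_below I (Some j). \<forall>k\<in>cut_below I (Some j). k \<le> m")
      case True
      then obtain m where m: "m \<in> cut_below I (Some j)" "\<forall>k\<in>cut_below I (Some j). k \<le> m" by blast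
      have mI: "m \<in> I" "m < j" using m by auto
      have km: "k0 \<le> m" using m k0B by blast
      then have fx: "\<sigma> m c = c" using less.prems mI by blast
      have "inv (\<sigma> m) c = c" using bij mI fx by (metis bij_is_inj inv_f_eq)
      then have "run I \<sigma> f0 (Some j) c = run I \<sigma> f0 (Some m) c" using run_succ_app[OF m, of \<sigma> f0 c] by simp
      also have "\<dots> = run I \<sigma> f0 (Some k0) c"
      proof -
        have "\<forall>\<eta>\<in>I. k0 \<le> \<eta> \<and> \<eta> < m \<longrightarrow> \<sigma> \<eta> c = c" using less.prems(2) mI by auto
        then show ?thesis using less.IH[OF mI(2) km] by blast
      qed
      finally show ?thesis .
    next
      case False
      show ?thesis
      proof (rule run_lim_ev[OF False k0B])
        show "\<forall>k'\<in>cut_below I (Some j). k0 \<le> k' \<longrightarrow> run I \<sigma> f0 (Some k') c = run I \<sigma> f0 (Some k0) c"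
        proof (intro ballI impI)
          fix k' assume k': "k' \<in> cut_below I (Some j)" "k0 \<le> k'"
          then have "k' < j" "\<forall>\<eta>\<in>I. k0 \<le> \<eta> \<and> \<eta> < k' \<longrightarrow> \<sigma> \<eta> c = c" using less.prems(2) by auto
          then show "run I \<sigma> f0 (Some k') c = run I \<sigma> f0 (Some k0) c" using less.IH k'(2) by blast
        qed
      qed
    qed
  qed
qed

lemma never_nac:
  assumes bij: "\<forall>\<eta>\<in>I. bij (\<sigma> \<eta>)" and fin: "\<forall>c. finite {\<eta>\<in>I. \<sigma> \<eta> c \<noteq> c}"
    and f0: "\<forall>c. f0 c \<noteq> NaC"
  shows "run I \<sigma> f0 x c \<noteq> NaC"
proof -
  have "\<forall>c. run I \<sigma> f0 x c \<noteq> NaC"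
  proof (induction x rule: wf_induct[OF wf_RelS[of I]])
    case (1 x)
    have IH: "\<And>k c. k \<in> cut_below I x \<Longrightarrow> run I \<sigma> f0 (Some k) c \<noteq> NaC" using 1 by (auto simp: RelS_def)
    show ?case
    proof
      fix c
      consider (e) "cut_below I x = {}" | (m) m where "m \<in> cut_below I x" "\<forall>k\<in>cut_below I x. k \<le> m"
        | (l) "cut_below I x \<noteq> {}" "\<not>(\<exists>m\<in>cut_below I x. \<forall>k\<in>cut_below I x. k \<le> m)" by blast
      then show "run I \<sigma> f0 x c \<noteq> NaC"
      proof cases
        case e then show ?thesis using f0 by (simp add: run_empty)
      next
        case m then show ?thesis using run_succ_app[OF m, of \<sigma> f0 c] IH[OF m(1)] by simp
      next
        case l
        define M where "M = {\<eta>\<in>I. \<sigma> \<eta> c \<noteq> c} \<inter> cut_below I x"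
        have fM: "finite M" using fin M_def by auto
        obtain k0 where k0: "k0 \<in> cut_below I x" "\<forall>\<eta>\<in>M. \<eta> < k0"
        proof (cases "M = {}")
          case True then show ?thesis using l(1) that by blast
        next
          case False
          have "Max M \<in> cut_below I x" using Max_in[OF fM False] M_def by auto
          then obtain k where k: "k \<in> cut_below I x" "\<not> k \<le> Max M" using l(2) by blast
          have "\<forall>\<eta>\<in>M. \<eta> < k" using k(2) Max_ge[OF fM] by (meson not_le le_less_trans)
          then show ?thesis using that k(1) by blast
        qed
        have k0I: "k0 \<in> I" using k0 cut_sub by blast
        have "\<forall>k'\<in>cut_below I x. k0 \<le> k' \<longrightarrow> run I \<sigma> f0 (Some k') c = run I \<sigma> f0 (Some k0) c"
        proof (intro ballI impI)
          fix k' assume k': "k' \<in> cut_below I x" "k0 \<le> k'"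
          have "\<forall>\<eta>\<in>I. k0 \<le> \<eta> \<and> \<eta> < k' \<longrightarrow> \<sigma> \<eta> c = c"
          proof (intro ballI impI)
            fix \<eta> assume h: "\<eta> \<in> I" "k0 \<le> \<eta> \<and> \<eta> < k'"
            then have hB: "\<eta> \<in> cut_below I x" using cut_down[OF k'(1)] by auto
            have "\<eta> \<notin> M" using k0(2) h(2) by (meson not_le)
            then show "\<sigma> \<eta> c = c" using h(1) hB M_def by auto
          qed
          then show "run I \<sigma> f0 (Some k') c = run I \<sigma> f0 (Some k0) c"
            using run_const[OF bij k0I k'(2)] by blast
        qed
        then have "run I \<sigma> f0 x c = run I \<sigma> f0 (Some k0) c" by (rule run_lim_ev[OF l(2) k0(1)])
        then show ?thesis using IH[OF k0(1)] by simp
      qed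
    qed
  qed
  then show ?thesis by blast
qed

lemma run_inj:
  assumes bij: "\<forall>\<eta>\<in>I. bij (\<sigma> \<eta>)" and f0: "inj f0"
  shows "run I \<sigma> f0 x c = run I \<sigma> f0 x d \<Longrightarrow> run I \<sigma> f0 x c \<noteq> NaC \<Longrightarrow> c = d"
proof -
  have "\<forall>c d. run I \<sigma> f0 x c = run I \<sigma> f0 x d \<longrightarrow> run I \<sigma> f0 x c \<noteq> NaC \<longrightarrow> c = d"
  proof (induction x rule: wf_induct[OF wf_RelS[of I]])
    case (1 x)
    have IH: "\<And>k c d. k \<in> cut_below I x \<Longrightarrow> run I \<sigma> f0 (Some k) c = run I \<sigma> f0 (Some k) d \<Longrightarrow>
       run I \<sigma> f0 (Some k) c \<noteq> NaC \<Longrightarrow> c = d" using 1 by (auto simp: RelS_def)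
    show ?case
    proof (intro allI impI)
      fix c d assume cd: "run I \<sigma> f0 x c = run I \<sigma> f0 x d" "run I \<sigma> f0 x c \<noteq> NaC"
      consider (e) "cut_below I x = {}" | (m) m where "m \<in> cut_below I x" "\<forall>k\<in>cut_below I x. k \<le> m"
        | (l) "cut_below I x \<noteq> {}" "\<not>(\<exists>m\<in>cut_below I x. \<forall>k\<in>cut_below I x. k \<le> m)" by blast
      then show "c = d"
      proof cases
        case e then show ?thesis using cd f0 by (simp add: run_empty inj_def)
      next
        case m
        have "inv (\<sigma> m) c = inv (\<sigma> m) d" using IH[OF m(1)] cd run_succ_app[OF m, of \<sigma> f0] by metis
        moreover have "surj (\<sigma> m)" using bij m(1) cut_sub bij_is_surj by blast
        ultimately show ?thesis by (metis surj_f_inv_f)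
      next
        case l
        obtain k1 where k1: "k1 \<in> cut_below I x" "\<forall>k'\<in>cut_below I x. k1 \<le> k' \<longrightarrow> run I \<sigma> f0 (Some k') c = run I \<sigma> f0 x c"
          using run_lim_nac[OF l(2) cd(2) l(1)] by blast
        obtain k2 where k2: "k2 \<in> cut_below I x" "\<forall>k'\<in>cut_below I x. k2 \<le> k' \<longrightarrow> run I \<sigma> f0 (Some k') d = run I \<sigma> f0 x d"
          using run_lim_nac[OF l(2) _ l(1), of \<sigma> f0 d] cd by auto
        have kB: "max k1 k2 \<in> cut_below I x" using k1(1) k2(1) by (simp add: max_def)
        have "run I \<sigma> f0 (Some (max k1 k2)) c = run I \<sigma> f0 x c" using k1(2) kB by simp
        moreover have "run I \<sigma> f0 (Some (max k1 k2)) d = run I \<sigma> f0 x d" using k2(2) kB by simp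
        ultimately show ?thesis using IH[OF kB] cd by simp
      qed
    qed
  qed
  then show "run I \<sigma> f0 x c = run I \<sigma> f0 x d \<Longrightarrow> run I \<sigma> f0 x c \<noteq> NaC \<Longrightarrow> c = d" by blast
qed


lemma nac_appears:
  assumes bij: "\<forall>\<eta>\<in>I. bij (\<sigma> \<eta>)" and f0: "inj f0"
    and inf: "infinite {\<eta>\<in>I. \<sigma> \<eta> = \<tau>}" and mv: "\<tau> c0 \<noteq> c0"
  shows "\<exists>x. (x = None \<or> (\<exists>i\<in>I. x = Some i)) \<and> run I \<sigma> f0 x c0 = NaC"
proof -
  define S where "S = {\<eta>\<in>I. \<sigma> \<eta> = \<tau>}"
  define T where "T = {i\<in>I. infinite (S \<inter> {k\<in>I. k<i})}"
  define x where "x = (if T = {} then None else Some (LEAST i. i \<in> T))"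
  define B where "B = cut_below I x"
  have SI: "S \<subseteq> I" using S_def by auto
  have xform: "x = None \<or> (\<exists>i\<in>I. x = Some i)"
  proof (cases "T = {}")
    case False
    define l where "l = (LEAST i. i \<in> T)"
    have lT: "l \<in> T" unfolding l_def using False by (metis LeastI ex_in_conv)
    then have "l \<in> I" unfolding T_def by blast
    moreover have "x = Some l" using False by (simp add: x_def l_def)
    ultimately show ?thesis by blast
  qed (simp add: x_def)
  have infB: "infinite (S \<inter> B)"
  proof (cases "T = {}")
    case True
    then have "B = I" using x_def B_def by simp
    then show ?thesis using SI inf S_def by (simp add: Int_absorb2)
  next
    case False
    define l where "l = (LEAST i. i \<in> T)"
    have lT: "l \<in> T" unfolding l_def using False by (metis LeastI ex_in_conv)
    have Bl: "B = {k\<in>I. k<l}" using False by (simp add: B_def x_def l_def)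
    have "infinite (S \<inter> {k\<in>I. k<l})" using lT by (simp add: T_def)
    then show ?thesis using Bl by simp
  qed
  have finB: "\<forall>k\<in>B. finite (S \<inter> {k'\<in>I. k'<k})"
  proof
    fix k assume kB: "k \<in> B"
    then have kI: "k \<in> I" using B_def cut_sub by blast
    have "k \<notin> T"
    proof (cases "T = {}")
      case False
      define l where "l = (LEAST i. i \<in> T)"
      have Bl: "B = {k\<in>I. k<l}" using False by (simp add: B_def x_def l_def)
      then have "k < l" using kB by simp
      then show ?thesis unfolding l_def by (rule not_less_Least)
    qed simp
    then show "finite (S \<inter> {k'\<in>I. k'<k})" using kI unfolding T_def by blast
  qed
  have nomax: "\<not>(\<exists>m\<in>B. \<forall>k\<in>B. k \<le> m)"
  proof
    assume "\<exists>m\<in>B. \<forall>k\<in>B. k \<le> m"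
    then obtain m where m: "m \<in> B" "\<forall>k\<in>B. k \<le> m" by blast
    have "S \<inter> B \<subseteq> insert m (S \<inter> {k'\<in>I. k'<m})"
    proof
      fix e assume e: "e \<in> S \<inter> B"
      then have "e \<in> I" "e \<le> m" using m(2) SI by auto
      then show "e \<in> insert m (S \<inter> {k'\<in>I. k'<m})" using e by (cases "e = m") auto
    qed
    then show False using infB finB m(1) by (meson finite_insert finite_subset)
  qed
  have cof: "\<forall>k\<in>B. \<exists>\<eta>\<in>S\<inter>B. k \<le> \<eta>"
  proof
    fix k assume kB: "k \<in> B"
    show "\<exists>\<eta>\<in>S\<inter>B. k \<le> \<eta>"
    proof (rule ccontr)
      assume "\<not> ?thesis"
      then have "S \<inter> B \<subseteq> S \<inter> {k'\<in>I. k'<k}" using SI by (auto simp: not_le)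
      then show False using infB finB kB by (meson finite_subset)
    qed
  qed
  have neB: "B \<noteq> {}" using infB by auto
  have "run I \<sigma> f0 x c0 = NaC"
  proof (rule ccontr)
    assume ne: "run I \<sigma> f0 x c0 \<noteq> NaC"
    have "\<exists>k\<in>cut_below I x. \<forall>k'\<in>cut_below I x. k \<le> k' \<longrightarrow> run I \<sigma> f0 (Some k') c0 = run I \<sigma> f0 x c0"
      by (rule run_lim_nac[OF nomax[unfolded B_def] ne neB[unfolded B_def]])
    then obtain k where k: "k \<in> B" "\<forall>k'\<in>B. k \<le> k' \<longrightarrow> run I \<sigma> f0 (Some k') c0 = run I \<sigma> f0 x c0"
      unfolding B_def by blast
    obtain \<eta> where \<eta>: "\<eta> \<in> S" "\<eta> \<in> B" "k \<le> \<eta>" using cof k(1) by blast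
    have "\<exists>k''\<in>B. \<not> k'' \<le> \<eta>" using nomax \<eta>(2) by blast
    then obtain k'' where k'': "k'' \<in> B" "\<eta> < k''" by (auto simp: not_le)
    have \<eta>I: "\<eta> \<in> I" "\<sigma> \<eta> = \<tau>" using \<eta>(1) S_def by auto
    have k''I: "k'' \<in> I" using k'' B_def cut_sub by blast
    define s where "s = (LEAST j. j \<in> I \<and> \<eta> < j)"
    have s: "s \<in> I" "\<eta> < s" using LeastI[of "\<lambda>j. j \<in> I \<and> \<eta> < j" k''] k''(2) k''I s_def by auto
    have "s \<le> k''" using Least_le[of "\<lambda>j. j \<in> I \<and> \<eta> < j" k''] k''(2) k''I s_def by auto
    then have sB: "s \<in> B" using cut_down[OF k''(1)[unfolded B_def] s(1)] B_def by blast
    have mx1: "\<eta> \<in> cut_below I (Some s)" using \<eta>I s by simp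
    have mx2: "\<forall>j\<in>cut_below I (Some s). j \<le> \<eta>"
    proof
      fix j assume "j \<in> cut_below I (Some s)"
      then have j: "j \<in> I" "j < s" by auto
      show "j \<le> \<eta>"
      proof (rule ccontr)
        assume "\<not> j \<le> \<eta>"
        then have "s \<le> j" using Least_le[of "\<lambda>j. j \<in> I \<and> \<eta> < j" j] j(1) s_def by auto
        then show False using j(2) by simp
      qed
    qed
    have e1: "run I \<sigma> f0 (Some s) c0 = run I \<sigma> f0 (Some \<eta>) (inv \<tau> c0)"
      using run_succ_app[OF mx1 mx2, of \<sigma> f0 c0] \<eta>I by simp
    have "k \<le> s" using \<eta>(3) s(2) by simp
    then have e2: "run I \<sigma> f0 (Some s) c0 = run I \<sigma> f0 x c0" using k(2) sB by blast
    have e3: "run I \<sigma> f0 (Some \<eta>) c0 = run I \<sigma> f0 x c0" using k(2) \<eta>(2,3) by blast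
    have eq: "run I \<sigma> f0 (Some \<eta>) (inv \<tau> c0) = run I \<sigma> f0 (Some \<eta>) c0"
      using e1[symmetric] e2 e3[symmetric] by (rule trans[OF trans])
    have nn: "run I \<sigma> f0 (Some \<eta>) (inv \<tau> c0) \<noteq> NaC" using eq e3 ne by simp
    have "inv \<tau> c0 = c0" by (rule run_inj[OF bij f0 eq nn])
    moreover have "surj \<tau>" using bij \<eta>I by (metis bij_is_surj)
    ultimately show False using mv by (metis surj_f_inv_f)
  qed
  then show ?thesis using xform by blast
qed

lemma nac_persists:
  assumes bij: "\<forall>\<eta>\<in>I. bij (\<sigma> \<eta>)" and finO: "finite Ob" and cl: "\<forall>\<eta>\<in>I. \<forall>d\<in>Ob. \<sigma> \<eta> d \<in> Ob"
    and i0: "i0 \<in> I" and d0: "d0 \<in> Ob" and nac: "run I \<sigma> f0 (Some i0) d0 = NaC"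
  shows "\<exists>d\<in>Ob. run I \<sigma> f0 None d = NaC"
proof -
  have "(i0 \<in> cut_below I y \<or> y = Some i0) \<longrightarrow> (\<exists>d\<in>Ob. run I \<sigma> f0 y d = NaC)" for y
  proof (induction y rule: wf_induct[OF wf_RelS[of I]])
    case (1 y)
    have IH: "\<And>k. k \<in> cut_below I y \<Longrightarrow> (i0 \<in> cut_below I (Some k) \<or> k = i0) \<Longrightarrow> (\<exists>d\<in>Ob. run I \<sigma> f0 (Some k) d = NaC)"
      using 1 by (auto simp: RelS_def)
    show ?case
    proof
      assume h: "i0 \<in> cut_below I y \<or> y = Some i0"
      show "\<exists>d\<in>Ob. run I \<sigma> f0 y d = NaC"
      proof (cases "y = Some i0")
        case True then show ?thesis using d0 nac by blast
      next
        case False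
        then have i0B: "i0 \<in> cut_below I y" using h by blast
        show ?thesis
        proof (cases "\<exists>m\<in>cut_below I y. \<forall>k\<in>cut_below I y. k \<le> m")
          case True
          then obtain m where m: "m \<in> cut_below I y" "\<forall>k\<in>cut_below I y. k \<le> m" by blast
          have mI: "m \<in> I" using m cut_sub by blast
          have "i0 \<le> m" using m i0B by blast
          then have "i0 \<in> cut_below I (Some m) \<or> m = i0" using i0 by auto
          then obtain d where d: "d \<in> Ob" "run I \<sigma> f0 (Some m) d = NaC" using IH[OF m(1)] by blast
          have "inv (\<sigma> m) (\<sigma> m d) = d" using bij mI by (metis bij_is_inj inv_f_f)
          then have "run I \<sigma> f0 y (\<sigma> m d) = NaC" using run_succ_app[OF m, of \<sigma> f0 "\<sigma> m d"] d(2) by simp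
          moreover have "\<sigma> m d \<in> Ob" using cl mI d(1) by blast
          ultimately show ?thesis by blast
        next
          case False
          have neB: "cut_below I y \<noteq> {}" using i0B by blast
          show ?thesis
          proof (rule ccontr)
            assume "\<not> ?thesis"
            then have nn: "\<forall>d\<in>Ob. run I \<sigma> f0 y d \<noteq> NaC" by blast
            have ex: "\<forall>d\<in>Ob. \<exists>k. k \<in> cut_below I y \<and> (\<forall>k'\<in>cut_below I y. k \<le> k' \<longrightarrow> run I \<sigma> f0 (Some k') d = run I \<sigma> f0 y d)"
            proof
              fix d assume dO: "d \<in> Ob"
              have "\<exists>k\<in>cut_below I y. \<forall>k'\<in>cut_below I y. k \<le> k' \<longrightarrow> run I \<sigma> f0 (Some k') d = run I \<sigma> f0 y d"
                by (rule run_lim_nac[OF False _ neB]) (rule nn[rule_format, OF dO])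
              then show "\<exists>k. k \<in> cut_below I y \<and> (\<forall>k'\<in>cut_below I y. k \<le> k' \<longrightarrow> run I \<sigma> f0 (Some k') d = run I \<sigma> f0 y d)"
                by blast
            qed
            obtain K where K: "\<forall>d\<in>Ob. K d \<in> cut_below I y \<and> (\<forall>k'\<in>cut_below I y. K d \<le> k' \<longrightarrow> run I \<sigma> f0 (Some k') d = run I \<sigma> f0 y d)"
              using bchoice[OF ex] by blast
            define kk where "kk = Max (insert i0 (K ` Ob))"
            have fin: "finite (insert i0 (K ` Ob))" using finO by simp
            have sub: "insert i0 (K ` Ob) \<subseteq> cut_below I y" using K i0B by blast
            have kkB: "kk \<in> cut_below I y" using Max_in[OF fin] sub kk_def by blast
            have ge: "\<forall>d\<in>Ob. K d \<le> kk" "i0 \<le> kk" using Max_ge[OF fin] kk_def by auto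
            then have "i0 \<in> cut_below I (Some kk) \<or> kk = i0" using i0 by auto
            then obtain d where d: "d \<in> Ob" "run I \<sigma> f0 (Some kk) d = NaC" using IH[OF kkB] by blast
            have "K d \<le> kk" using ge d(1) by blast
            then have "run I \<sigma> f0 (Some kk) d = run I \<sigma> f0 y d" using K d(1) kkB by blast
            then show False using d nn by metis
          qed
        qed
      qed
    qed
  qed
  then show ?thesis using i0 by simp
qed

lemma abstract_main:
  fixes Tw :: "('c \<Rightarrow> 'c) set" and I :: "'i::wellorder set"
  assumes bijTw: "\<forall>\<tau>\<in>Tw. bij \<tau>" and basic: "basic_sequence Tw I \<sigma>"
    and finmv: "\<forall>c. finite {\<tau>\<in>Tw. \<tau> c \<noteq> c}"
    and wit: "\<forall>\<tau>\<in>Tw. \<exists>c0 Ob. \<tau> c0 \<noteq> c0 \<and> finite Ob \<and> c0 \<in> Ob \<and> Ob \<subseteq> C \<and> (\<forall>\<tau>'\<in>Tw. \<forall>d\<in>Ob. \<tau>' d \<in> Ob)"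
  shows "universally_convergent C I \<sigma> \<longleftrightarrow> twist_finite I \<sigma>"
proof
  have inTw: "\<forall>\<eta>\<in>I. \<sigma> \<eta> \<in> Tw" using basic basic_sequence_def by blast
  have bij: "\<forall>\<eta>\<in>I. bij (\<sigma> \<eta>)" using inTw bijTw by blast
  have f0: "inj (\<lambda>c::'c. Val c)" by (simp add: inj_def)
  {
    assume uc: "universally_convergent C I \<sigma>"
    show "twist_finite I \<sigma>" unfolding twist_finite_def
    proof (rule ccontr)
      assume "\<not> (\<forall>\<tau>. finite {\<eta> \<in> I. \<sigma> \<eta> = \<tau>})"
      then obtain \<tau> where inf: "infinite {\<eta> \<in> I. \<sigma> \<eta> = \<tau>}" by blast
      then obtain \<eta> where "\<eta> \<in> I" "\<sigma> \<eta> = \<tau>" by (metis (mono_tags, lifting) empty_Collect_eq finite.emptyI)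
      then have "\<tau> \<in> Tw" using inTw by blast
      then obtain c0 Ob where w: "\<tau> c0 \<noteq> c0" "finite Ob" "c0 \<in> Ob" "Ob \<subseteq> C" "\<forall>\<tau>'\<in>Tw. \<forall>d\<in>Ob. \<tau>' d \<in> Ob"
        using wit by blast
      obtain x where x: "x = None \<or> (\<exists>i\<in>I. x = Some i)" "run I \<sigma> (\<lambda>c. Val c) x c0 = NaC"
        using nac_appears[OF bij f0 inf w(1)] by blast
      have "\<exists>d\<in>Ob. run I \<sigma> (\<lambda>c. Val c) None d = NaC"
      proof (cases "x = None")
        case True then show ?thesis using x w(3) by blast
      next
        case False
        then obtain i where "i \<in> I" "x = Some i" using x(1) by blast
        then show ?thesis using nac_persists[OF bij w(2) _ _ w(3)] x(2) w(5) inTw by blast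
      qed
      then show False using uc w(4) unfolding universally_convergent_def terminal_def by blast
    qed
  }
  {
    assume tf: "twist_finite I \<sigma>"
    have fin: "\<forall>c. finite {\<eta>\<in>I. \<sigma> \<eta> c \<noteq> c}"
    proof
      fix c
      have "{\<eta>\<in>I. \<sigma> \<eta> c \<noteq> c} \<subseteq> (\<Union>\<tau>\<in>{\<tau>\<in>Tw. \<tau> c \<noteq> c}. {\<eta>\<in>I. \<sigma> \<eta> = \<tau>})" using inTw by auto
      moreover have "finite (\<Union>\<tau>\<in>{\<tau>\<in>Tw. \<tau> c \<noteq> c}. {\<eta>\<in>I. \<sigma> \<eta> = \<tau>})"
        using finmv tf unfolding twist_finite_def by blast
      ultimately show "finite {\<eta>\<in>I. \<sigma> \<eta> c \<noteq> c}" by (rule finite_subset)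
    qed
    show "universally_convergent C I \<sigma>" unfolding universally_convergent_def terminal_def
      using never_nac[OF bij fin, of "\<lambda>c. Val c"] by simp
  }
qed



lemma cneg_cneg[simp]: "cneg (cneg a) = a" by (cases a) auto
lemma is_inf_cneg[simp]: "is_inf (cneg a) = is_inf a" by (cases a) (auto simp: is_inf_def)
lemma cneg_crd[simp]: "(cneg a \<in> crd_set L) = (a \<in> crd_set L)" by (cases a) (auto simp: crd_set_def)
lemma axis_UNIV: "(UNIV::axis set) = {AX,AY,AZ}" using axis.exhaust by auto
lemma finite_axis[simp]: "finite (UNIV::axis set)" by (simp add: axis_UNIV)
lemma all_axis: "(\<forall>i. P i) \<longleftrightarrow> P AX \<and> P AY \<and> P AZ" by (metis axis.exhaust)

lemma Ucube_iff: "(x,y,z) \<in> Ucube L \<longleftrightarrow> x \<in> crd_set L \<and> y \<in> crd_set L \<and> z \<in> crd_set L"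
  unfolding Ucube_def by (simp add: all_axis)

lemma card_inf: "card {i. is_inf (coord i (x,y,z))} = 1 \<longleftrightarrow>
   (is_inf x \<and> \<not>is_inf y \<and> \<not>is_inf z) \<or> (\<not>is_inf x \<and> is_inf y \<and> \<not>is_inf z) \<or> (\<not>is_inf x \<and> \<not>is_inf y \<and> is_inf z)"
proof -
  have e: "{i. is_inf (coord i (x,y,z))} = (if is_inf x then {AX} else {}) \<union> (if is_inf y then {AY} else {}) \<union> (if is_inf z then {AZ} else {})"
    apply (rule set_eqI)
    subgoal for i by (cases i) auto
    done
  show ?thesis unfolding e by (cases "is_inf x"; cases "is_inf y"; cases "is_inf z"; simp)
qed

lemma edgeless_iff: "(x,y,z) \<in> edgeless L \<longleftrightarrow> x \<in> crd_set L \<and> y \<in> crd_set L \<and> z \<in> crd_set L \<and>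
   ((is_inf x \<and> \<not>is_inf y \<and> \<not>is_inf z) \<or> (\<not>is_inf x \<and> is_inf y \<and> \<not>is_inf z) \<or> (\<not>is_inf x \<and> \<not>is_inf y \<and> is_inf z))"
  using card_inf[of x y z] by (simp add: edgeless_def Ucube_iff)

lemma edged_iff: "((x,y,z), j) \<in> edged L \<longleftrightarrow> x \<in> crd_set L \<and> y \<in> crd_set L \<and> z \<in> crd_set L \<and> is_inf (coord j (x,y,z))"
  by (simp add: edged_def Ucube_iff)

lemma rotp_coord[simp]: "coord i (rotp i p) = coord i p"
  by (cases i; cases p) auto

lemma rotp_edgeless[simp]: "(rotp i p \<in> edgeless L) = (p \<in> edgeless L)"
  by (cases i; cases p) (auto simp: edgeless_iff)

lemma rotp4: "rotp i (rotp i (rotp i (rotp i p))) = p"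
  by (cases i; cases p) auto

definition rote :: "axis \<Rightarrow> 'a pt \<times> axis \<Rightarrow> 'a pt \<times> axis" where
  "rote i c = (rotp i (fst c), rota i (snd c))"

lemma rote_edged[simp]: "(rote i c \<in> edged L) = (c \<in> edged L)"
proof -
  obtain p j where c0: "c = (p,j)" by (cases c) blast
  obtain x y z where p: "p = (x,y,z)" by (cases p) blast
  have c: "c = ((x,y,z),j)" using c0 p by simp
  show ?thesis unfolding c rote_def by (cases i; cases j) (auto simp: edged_iff)
qed

lemma rote4: "rote i (rote i (rote i (rote i c))) = c"
proof -
  obtain p j where c: "c = (p,j)" by (cases c) blast
  have "rota i (rota i (rota i (rota i j))) = j" by (cases i; cases j) auto
  then show ?thesis unfolding c rote_def by (simp add: rotp4)
qed

lemma rote_coord[simp]: "coord i (fst (rote i c)) = coord i (fst c)"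
  by (simp add: rote_def)

lemma funpow_fix: "f p = p \<Longrightarrow> (f ^^ k) p = p"
  by (induction k) auto

lemma funpow_closed: "(\<And>d. d \<in> A \<Longrightarrow> f d \<in> A) \<Longrightarrow> d \<in> A \<Longrightarrow> (f ^^ n) d \<in> A"
  by (induction n) auto

lemma bij4: assumes "\<And>p. f (f (f (f p))) = p" shows "bij f"
proof -
  have "inj f"
  proof
    fix a b assume "f a = f b"
    then have "f (f (f (f a))) = f (f (f (f b)))" by simp
    then show "a = b" using assms by simp
  qed
  moreover have "surj f" by (rule surjI[of f "\<lambda>p. f (f (f p))"]) (simp add: assms)
  ultimately show ?thesis by (simp add: bij_def)
qed

lemma bij_pow: fixes f :: "'b \<Rightarrow> 'b" shows "bij f \<Longrightarrow> bij (f ^^ n)"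
  by (induction n) (simp_all add: bij_comp)

lemma qpt_fix: "coord i p \<noteq> \<alpha> \<Longrightarrow> qturn_pt L i \<alpha> p = p"
  by (simp add: qturn_pt_def)

lemma rotp_pow: "(rotp i ^^ k) p \<in> edgeless L \<longleftrightarrow> p \<in> edgeless L" "coord i ((rotp i ^^ k) p) = coord i p"
  by (induction k) auto

lemma qpt_pow: "p \<in> edgeless L \<Longrightarrow> coord i p = \<alpha> \<Longrightarrow> (qturn_pt L i \<alpha> ^^ k) p = (rotp i ^^ k) p"
  by (induction k) (auto simp: qturn_pt_def rotp_pow)

lemma qpt4: "qturn_pt L i \<alpha> (qturn_pt L i \<alpha> (qturn_pt L i \<alpha> (qturn_pt L i \<alpha> p))) = p"
proof (cases "p \<in> edgeless L \<and> coord i p = \<alpha>")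
  case True
  then show ?thesis by (simp add: qturn_pt_def rotp4)
next
  case False
  then have "qturn_pt L i \<alpha> p = p" unfolding qturn_pt_def by auto
  then show ?thesis by simp
qed

lemma bij_qpt: "\<tau> \<in> basic_twists (crd_set L) (qturn_pt L) \<Longrightarrow> bij \<tau>"
proof -
  assume "\<tau> \<in> basic_twists (crd_set L) (qturn_pt L)"
  then obtain i \<alpha> k where t: "\<tau> = qturn_pt L i \<alpha> ^^ k" unfolding basic_twists_def by blast
  have "bij (qturn_pt L i \<alpha>)" by (rule bij4) (rule qpt4)
  then show "bij \<tau>" unfolding t by (rule bij_pow)
qed

lemma qed_fix: "coord i (fst c) \<noteq> \<alpha> \<Longrightarrow> qturn_edge L i \<alpha> c = c"
  by (simp add: qturn_edge_def)

lemma qe_alt: "qturn_edge L i \<alpha> c = (if c \<in> edged L \<and> coord i (fst c) = \<alpha> then rote i c else c)"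
  by (simp add: qturn_edge_def rote_def)

lemma rote_pow1: "(rote i ^^ k) c \<in> edged L \<longleftrightarrow> c \<in> edged L"
  by (induction k) auto
lemma rote_pow2: "coord i (fst ((rote i ^^ k) c)) = coord i (fst c)"
  by (induction k) auto
lemma rote_pow3: "fst ((rote i ^^ k) c) = (rotp i ^^ k) (fst c)"
  by (induction k) (auto simp: rote_def)

lemma qe_pow: "c \<in> edged L \<Longrightarrow> coord i (fst c) = \<alpha> \<Longrightarrow> (qturn_edge L i \<alpha> ^^ k) c = (rote i ^^ k) c"
  by (induction k) (auto simp: qe_alt rote_pow1 rote_pow2)

lemma qe4: "qturn_edge L i \<alpha> (qturn_edge L i \<alpha> (qturn_edge L i \<alpha> (qturn_edge L i \<alpha> c))) = c"
proof (cases "c \<in> edged L \<and> coord i (fst c) = \<alpha>")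
  case True
  then show ?thesis by (simp add: qe_alt rote4)
next
  case False
  then have "qturn_edge L i \<alpha> c = c" unfolding qe_alt by auto
  then show ?thesis by simp
qed

lemma bij_qe: "\<tau> \<in> basic_twists (crd_set L) (qturn_edge L) \<Longrightarrow> bij \<tau>"
proof -
  assume "\<tau> \<in> basic_twists (crd_set L) (qturn_edge L)"
  then obtain i \<alpha> k where t: "\<tau> = qturn_edge L i \<alpha> ^^ k" unfolding basic_twists_def by blast
  have "bij (qturn_edge L i \<alpha>)" by (rule bij4) (rule qe4)
  then show "bij \<tau>" unfolding t by (rule bij_pow)
qed


lemma finmv_pt: "finite {\<tau>\<in>basic_twists (crd_set L) (qturn_pt L). \<tau> c \<noteq> c}"
proof -
  have "{\<tau>\<in>basic_twists (crd_set L) (qturn_pt L). \<tau> c \<noteq> c} \<subseteq>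
        (\<lambda>(i,k). qturn_pt L i (coord i c) ^^ k) ` (UNIV \<times> {1,2,3})"
  proof
    fix \<tau> assume t: "\<tau> \<in> {\<tau>\<in>basic_twists (crd_set L) (qturn_pt L). \<tau> c \<noteq> c}"
    then obtain i \<alpha> k where e: "\<tau> = qturn_pt L i \<alpha> ^^ k" "k \<in> {1,2,3}" unfolding basic_twists_def by blast
    have "\<alpha> = coord i c"
    proof (rule ccontr)
      assume "\<alpha> \<noteq> coord i c"
      then have "qturn_pt L i \<alpha> c = c" by (simp add: qpt_fix)
      then have "\<tau> c = c" unfolding e(1) by (rule funpow_fix)
      then show False using t by simp
    qed
    then show "\<tau> \<in> (\<lambda>(i,k). qturn_pt L i (coord i c) ^^ k) ` (UNIV \<times> {1,2,3})" using e by force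
  qed
  moreover have "finite ((\<lambda>(i,k). qturn_pt L i (coord i c) ^^ k) ` (UNIV \<times> {1::nat,2,3}))" by simp
  ultimately show ?thesis by (rule finite_subset)
qed

lemma finmv_e: "finite {\<tau>\<in>basic_twists (crd_set L) (qturn_edge L). \<tau> c \<noteq> c}"
proof -
  have "{\<tau>\<in>basic_twists (crd_set L) (qturn_edge L). \<tau> c \<noteq> c} \<subseteq>
        (\<lambda>(i,k). qturn_edge L i (coord i (fst c)) ^^ k) ` (UNIV \<times> {1,2,3})"
  proof
    fix \<tau> assume t: "\<tau> \<in> {\<tau>\<in>basic_twists (crd_set L) (qturn_edge L). \<tau> c \<noteq> c}"
    then obtain i \<alpha> k where e: "\<tau> = qturn_edge L i \<alpha> ^^ k" "k \<in> {1,2,3}" unfolding basic_twists_def by blast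
    have "\<alpha> = coord i (fst c)"
    proof (rule ccontr)
      assume "\<alpha> \<noteq> coord i (fst c)"
      then have "qturn_edge L i \<alpha> c = c" by (simp add: qed_fix)
      then have "\<tau> c = c" unfolding e(1) by (rule funpow_fix)
      then show False using t by simp
    qed
    then show "\<tau> \<in> (\<lambda>(i,k). qturn_edge L i (coord i (fst c)) ^^ k) ` (UNIV \<times> {1,2,3})" using e by force
  qed
  moreover have "finite ((\<lambda>(i,k). qturn_edge L i (coord i (fst c)) ^^ k) ` (UNIV \<times> {1::nat,2,3}))" by simp
  ultimately show ?thesis by (rule finite_subset)
qed

lemma witness_pt:
  assumes L: "infinite L" and a: "\<alpha> \<in> crd_set L" and k: "k \<in> {1::nat,2,3}"
  shows "\<exists>p0\<in>edgeless L. coord i p0 = \<alpha> \<and> (rotp i ^^ k) p0 \<noteq> p0"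
proof -
  obtain r where r: "r \<in> L" using L by (metis ex_in_conv finite.emptyI)
  define u where "u = (if is_inf \<alpha> then Pos r else PInf)"
  define p0 where "p0 = (case i of AX \<Rightarrow> (\<alpha>,u,Zero) | AY \<Rightarrow> (Zero,\<alpha>,u) | AZ \<Rightarrow> (u,Zero,\<alpha>))"
  have cr: "Zero \<in> crd_set L" "Pos r \<in> crd_set L" "PInf \<in> crd_set L" using r by (auto simp: crd_set_def)
  have kk: "k = Suc 0 \<or> k = Suc (Suc 0) \<or> k = Suc (Suc (Suc 0))" using k by auto
  have "p0 \<in> edgeless L \<and> coord i p0 = \<alpha> \<and> (rotp i ^^ k) p0 \<noteq> p0"
    using a cr kk
    by (cases i; cases \<alpha>; elim disjE; simp add: p0_def u_def edgeless_iff is_inf_def)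
  then show ?thesis by blast
qed

definition clo :: "'a pt \<Rightarrow> 'a crd set" where
  "clo p = (case p of (x,y,z) \<Rightarrow> {x, cneg x, y, cneg y, z, cneg z})"

definition inV :: "'a crd set \<Rightarrow> 'a pt \<Rightarrow> bool" where
  "inV V p = (case p of (x,y,z) \<Rightarrow> x \<in> V \<and> y \<in> V \<and> z \<in> V)"

lemma clo_closed: "a \<in> clo p \<Longrightarrow> cneg a \<in> clo p"
  by (cases p) (auto simp: clo_def)

lemma clo_fin: "finite (clo p)"
  by (cases p) (auto simp: clo_def)

lemma inV_self: "inV (clo p) p"
  by (cases p) (auto simp: clo_def inV_def)

lemma inV_rotp: "(\<And>a. a \<in> V \<Longrightarrow> cneg a \<in> V) \<Longrightarrow> inV V p \<Longrightarrow> inV V (rotp i p)"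
  by (cases i; cases p) (auto simp: inV_def)

lemma inV_fin: "finite V \<Longrightarrow> finite {p. inV V p}"
proof -
  assume "finite V"
  moreover have "{p. inV V p} \<subseteq> V \<times> V \<times> V" by (auto simp: inV_def)
  ultimately show ?thesis by (meson finite_SigmaI finite_subset)
qed

lemma wit_pt:
  assumes L: "infinite L" and t: "\<tau> \<in> basic_twists (crd_set L) (qturn_pt L)"
  shows "\<exists>c0 Ob. \<tau> c0 \<noteq> c0 \<and> finite Ob \<and> c0 \<in> Ob \<and> Ob \<subseteq> edgeless L \<and>
     (\<forall>\<tau>'\<in>basic_twists (crd_set L) (qturn_pt L). \<forall>d\<in>Ob. \<tau>' d \<in> Ob)"
proof -
  obtain i \<alpha> k where e: "\<tau> = qturn_pt L i \<alpha> ^^ k" "\<alpha> \<in> crd_set L" "k \<in> {1,2,3}"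
    using t unfolding basic_twists_def by blast
  obtain p0 where p0: "p0 \<in> edgeless L" "coord i p0 = \<alpha>" "(rotp i ^^ k) p0 \<noteq> p0"
    using witness_pt[OF L e(2) e(3)] by blast
  have mv: "\<tau> p0 \<noteq> p0" unfolding e(1) using qpt_pow[OF p0(1,2)] p0(3) by simp
  define Ob where "Ob = edgeless L \<inter> {p. inV (clo p0) p}"
  have fin: "finite Ob" unfolding Ob_def using inV_fin[OF clo_fin] by blast
  have c0: "p0 \<in> Ob" unfolding Ob_def using p0(1) inV_self by blast
  have cl1: "qturn_pt L j \<beta> d \<in> Ob" if "d \<in> Ob" for j \<beta> d
  proof -
    have "inV (clo p0) (rotp j d)" by (rule inV_rotp[OF clo_closed]) (use that in \<open>simp_all add: Ob_def\<close>)
    then have "rotp j d \<in> Ob" using that unfolding Ob_def by simp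
    then show ?thesis using that by (simp add: qturn_pt_def)
  qed
  have cl: "\<forall>\<tau>'\<in>basic_twists (crd_set L) (qturn_pt L). \<forall>d\<in>Ob. \<tau>' d \<in> Ob"
  proof (intro ballI)
    fix \<tau>' d assume t': "\<tau>' \<in> basic_twists (crd_set L) (qturn_pt L)" and d: "d \<in> Ob"
    then obtain j \<beta> n where "\<tau>' = qturn_pt L j \<beta> ^^ n" unfolding basic_twists_def by blast
    then show "\<tau>' d \<in> Ob" using funpow_closed[of Ob "qturn_pt L j \<beta>", OF cl1 d] by simp
  qed
  show ?thesis using mv fin c0 cl Ob_def by blast
qed

lemma wit_e:
  assumes L: "infinite L" and t: "\<tau> \<in> basic_twists (crd_set L) (qturn_edge L)"
  shows "\<exists>c0 Ob. \<tau> c0 \<noteq> c0 \<and> finite Ob \<and> c0 \<in> Ob \<and> Ob \<subseteq> edged L \<and>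
     (\<forall>\<tau>'\<in>basic_twists (crd_set L) (qturn_edge L). \<forall>d\<in>Ob. \<tau>' d \<in> Ob)"
proof -
  obtain i \<alpha> k where e: "\<tau> = qturn_edge L i \<alpha> ^^ k" "\<alpha> \<in> crd_set L" "k \<in> {1,2,3}"
    using t unfolding basic_twists_def by blast
  obtain p0 where p0: "p0 \<in> edgeless L" "coord i p0 = \<alpha>" "(rotp i ^^ k) p0 \<noteq> p0"
    using witness_pt[OF L e(2) e(3)] by blast
  have "card {j. is_inf (coord j p0)} = 1" using p0(1) by (simp add: edgeless_def)
  then obtain j0 where j0: "is_inf (coord j0 p0)" by (metis (mono_tags) One_nat_def card.empty empty_Collect_eq zero_neq_one)
  have p0U: "p0 \<in> Ucube L" using p0(1) by (simp add: edgeless_def)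
  define c0 where "c0 = (p0, j0)"
  have c0E: "c0 \<in> edged L" using p0U j0 by (simp add: c0_def edged_def)
  have "(qturn_edge L i \<alpha> ^^ k) c0 = (rote i ^^ k) c0" by (rule qe_pow[OF c0E]) (simp add: c0_def p0(2))
  then have "fst ((qturn_edge L i \<alpha> ^^ k) c0) = (rotp i ^^ k) p0" by (simp add: rote_pow3 c0_def)
  then have mv: "\<tau> c0 \<noteq> c0" unfolding e(1) using p0(3) c0_def by auto
  define Ob where "Ob = edged L \<inter> {c. inV (clo p0) (fst c)}"
  have "Ob \<subseteq> {p. inV (clo p0) p} \<times> UNIV" unfolding Ob_def by auto
  then have fin: "finite Ob" using inV_fin[OF clo_fin, of p0] by (meson finite_SigmaI finite_axis finite_subset)
  have c0O: "c0 \<in> Ob" unfolding Ob_def using c0E inV_self[of p0] c0_def by auto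
  have cl1: "qturn_edge L j \<beta> d \<in> Ob" if "d \<in> Ob" for j \<beta> d
  proof -
    have "inV (clo p0) (rotp j (fst d))" by (rule inV_rotp[OF clo_closed]) (use that in \<open>simp_all add: Ob_def\<close>)
    moreover have "rote j d \<in> edged L" using that unfolding Ob_def by simp
    ultimately have "rote j d \<in> Ob" unfolding Ob_def by (simp add: rote_def[of j d])
    then show ?thesis using that by (simp add: qe_alt)
  qed
  have cl: "\<forall>\<tau>'\<in>basic_twists (crd_set L) (qturn_edge L). \<forall>d\<in>Ob. \<tau>' d \<in> Ob"
  proof (intro ballI)
    fix \<tau>' d assume t': "\<tau>' \<in> basic_twists (crd_set L) (qturn_edge L)" and d: "d \<in> Ob"
    then obtain j \<beta> n where "\<tau>' = qturn_edge L j \<beta> ^^ n" unfolding basic_twists_def by blast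
    then show "\<tau>' d \<in> Ob" using funpow_closed[of Ob "qturn_edge L j \<beta>", OF cl1 d] by simp
  qed
  have "Ob \<subseteq> edged L" unfolding Ob_def by blast
  then show ?thesis using mv fin c0O cl by blast
qed

theorem lemma3p3:
  fixes L :: "'a set"
    and I :: "'i::wellorder set" and \<sigma> :: "'i \<Rightarrow> 'a pt \<Rightarrow> 'a pt"
    and J :: "'j::wellorder set" and \<tau> :: "'j \<Rightarrow> 'a pt \<times> axis \<Rightarrow> 'a pt \<times> axis"
  assumes "infinite L"
  shows "(basic_sequence (basic_twists (crd_set L) (qturn_pt L)) I \<sigma> \<longrightarrow>
            (universally_convergent (edgeless L) I \<sigma> \<longleftrightarrow> twist_finite I \<sigma>))
       \<and> (basic_sequence (basic_twists (crd_set L) (qturn_edge L)) J \<tau> \<longrightarrow>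
            (universally_convergent (edged L) J \<tau> \<longleftrightarrow> twist_finite J \<tau>))"
proof (intro conjI impI)
  assume b: "basic_sequence (basic_twists (crd_set L) (qturn_pt L)) I \<sigma>"
  show "universally_convergent (edgeless L) I \<sigma> \<longleftrightarrow> twist_finite I \<sigma>"
    by (rule abstract_main[OF _ b]) (use bij_qpt finmv_pt wit_pt[OF assms] in blast)+
next
  assume b: "basic_sequence (basic_twists (crd_set L) (qturn_edge L)) J \<tau>"
  show "universally_convergent (edged L) J \<tau> \<longleftrightarrow> twist_finite J \<tau>"
    by (rule abstract_main[OF _ b]) (use bij_qe finmv_e wit_e[OF assms] in blast)+
qed

end
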